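(* Assume (A1)–(A4). For every geometric covering interval $J=[i,j]\in\mathcal{I}$ with $j\le T$, POLA satisfies $$\sum_{u=i}^jf_u(\mathbf{x}_u)-\min_{\mathbf{x}\in\mathcal{K}}\sum_{u=i}^jf_u(\mathbf{x})\le\sqrt{3c(j)}\,|J|^{1/2}+\Big(\sqrt3G+\frac74D^2+\frac12G^2\Big)|J|^{3/4},$$ where $c(j)\le1+\ln j+\ln(1+\log_2j)+\ln\frac{5+3\ln(1+j)}{2}$.
   Context: Online convex optimization: for rounds $t=1,\dots,T$ a learner chooses $\mathbf{x}_t\in\mathcal{K}$, then a loss $f_t:\mathcal{K}\to\mathbb{R}$ is revealed (chosen adversarially), the learner suffers $f_t(\mathbf{x}_t)$ and can access $f_t$. Standing assumptions: (A1) $\mathcal{K}\subseteq\mathbb{R}^d$ is convex and compact, contains $\mathbf{0}$, and $\mathcal{K}\subseteq R\mathcal{B}$ where $R\mathcal{B}$ is the closed Euclidean ball of radius $R$ centered at $\mathbf{0}$; set $D=2R$, so $\|\mathbf{x}-\mathbf{x}'\|_2\le D$ for all $\mathbf{x},\mathbf{x}'\in\mathcal{K}$. (A2) Each $f_t$ is $G$-Lipschitz on $\mathcal{K}$, and its (sub)gradients satisfy $\|\nabla f_t(\mathbf{x})\|_2\le G$. (A3) Each $f_t$ is convex on $\mathcal{K}$: $f_t(\mathbf{y})\ge f_t(\mathbf{x})+\nabla f_t(\mathbf{x})^\top(\mathbf{y}-\mathbf{x})$. (A4) $0\le f_t(\mathbf{x})\le1$ for all $\mathbf{x}\in\mathcal{K}$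 and all $t$. Infeasible projection oracle $\mathcal{O}_{\mathrm{IP}}(\mathcal{K},\epsilon,\mathbf{x}_0,\mathbf{y}_0)$: given $\epsilon>0$, $\mathbf{x}_0\in\mathcal{K}$, $\mathbf{y}_0\in\mathbb{R}^d$, returns $(\mathbf{x},\tilde{\mathbf{y}})\in\mathcal{K}\times R\mathcal{B}$ with $\|\mathbf{x}-\tilde{\mathbf{y}}\|_2\le\sqrt{3\epsilon}$ and $\|\tilde{\mathbf{y}}-\mathbf{z}\|_2\le\|\mathbf{y}_0-\mathbf{z}\|_2$ for all $\mathbf{z}\in\mathcal{K}$. Algorithm $\mathrm{BOGD}_{\mathrm{IP}}$ (step size $\eta$, block size $K$, tolerance $\epsilon$): pick $\mathbf{x}_1\in\mathcal{K}$ arbitrary, $\tilde{\mathbf{y}}_1=\mathbf{x}_1$. Rounds are split into blocks; block $m$ consists of rounds $(m-1)K+1,\dots,mK$. At every round $t$ of block $m$ the algorithm plays $\mathbf{x}_t=\mathbf{x}_m$. At the last round of block $m$ it sets $\mathbf{y}_{m+1}=\tilde{\mathbf{y}}_m-\eta\sum_{r=(m-1)K+1}^{mK}\nabla f_r(\mathbf{x}_m)$ and $(\mathbf{x}_{m+1},\tilde{\mathbf{y}}_{m+1})=\mathcal{O}_{\mathrm{IP}}(\mathcal{K},\epsilon,\mathbf{x}_m,\mathbf{y}_{m+1})$. Unless stated otherwise, it is run with $K=\eta^{-2/3}$ and $\epsilon=\eta^{2/3}$ (block sizes assumed integral). Geometric covering (GC) intervals: $\mathcal{I}=\bigcup_{k\ge0}\mathcal{I}_k$,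 $\mathcal{I}_k=\{[i\cdot2^k,(i+1)\cdot2^k-1]: i\in\{1,2,\dots\}\}$ (intervals of integers). Algorithm POLA: $\Phi(R,C)=\exp([R]_+^2/(3C))$ with $[x]_+=\max(0,x)$ and $\Phi(0,0)=1$; $w(R,C)=\frac12(\Phi(R+1,C+1)-\Phi(R-1,C+1))$. At each round $t$, for every $I\in\mathcal{I}$ whose first round is $t$, create expert $E_I$: an instance of $\mathrm{BOGD}_{\mathrm{IP}}$ started at round $t$ from an arbitrary point with step size $\eta=|I|^{-3/4}$, run on the rounds of $I$ only; set $R_{t-1,I}=C_{t-1,I}=0$. The active set $\mathcal{A}_t$ consists of the experts $E_I$ with $t\in I$. Each $E_I\in\mathcal{A}_t$ outputs $\mathbf{x}_{t,I}\in\mathcal{K}$; set $w_{t,I}=w(R_{t-1,I},C_{t-1,I})/\sum_{E_{I'}\in\mathcal{A}_t}w(R_{t-1,I'},C_{t-1,I'})$ and play $\mathbf{x}_t=\sum_{E_I\in\mathcal{A}_t}w_{t,I}\mathbf{x}_{t,I}$. After $f_t$ is revealed, for each $E_I\in\mathcal{A}_t$ set $R_{t,I}=R_{t-1,I}+f_t(\mathbf{x}_t)-f_t(\mathbf{x}_{t,I})$, $C_{t,I}=C_{t-1,I}+|f_t(\mathbf{x}_t)-f_t(\mathbf{x}_{t,I})|$, and pass $f_t$ to $E_I$. *)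

theory Defs
  imports "HOL-Analysis.Analysis"
begin

definition GC :: "nat set set" where
  "GC = {{i * 2^k .. (i + 1) * 2^k - 1} | i k. (i::nat) \<ge> 1}"

text \<open>Potential and weight of POLA. Note Phi 0 0 = exp 0 = 1 since x / 0 = 0.\<close>
definition Phi :: "real \<Rightarrow> real \<Rightarrow> real" where
  "Phi R C = exp ((max 0 R)^2 / (3 * C))"

definition wgt :: "real \<Rightarrow> real \<Rightarrow> real" where
  "wgt R C = (Phi (R + 1) (C + 1) - Phi (R - 1) (C + 1)) / 2"

definition eta :: "nat set \<Rightarrow> real" where
  "eta I = real (card I) powr (-3/4)"

text \<open>State (x_{m+1}, y~_{m+1}) of BOGD_IP for expert E_I at (0-based) block m.
  Oracle Orc may depend on the expert I and the call index; its outputs are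
  constrained by the theorem's hypothesis.\<close>
primrec bogd_state ::
  "(nat set \<Rightarrow> nat \<Rightarrow> real \<Rightarrow> 'a \<Rightarrow> 'a \<Rightarrow> 'a \<times> 'a) \<Rightarrow> (nat \<Rightarrow> 'a \<Rightarrow> 'a::real_vector)
   \<Rightarrow> (nat set \<Rightarrow> 'a) \<Rightarrow> (nat set \<Rightarrow> nat) \<Rightarrow> nat set \<Rightarrow> nat \<Rightarrow> 'a \<times> 'a" where
  "bogd_state Orc g x0 bsz I 0 = (x0 I, x0 I)"
| "bogd_state Orc g x0 bsz I (Suc m) =
    (case bogd_state Orc g x0 bsz I m of (x, y) \<Rightarrow>
      Orc I (Suc m) (eta I powr (2/3)) x
        (y - eta I *\<^sub>R (\<Sum>r\<in>{Min I + m * bsz I ..< Min I + Suc m * bsz I}. g r x)))"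

definition expert_play ::
  "(nat set \<Rightarrow> nat \<Rightarrow> real \<Rightarrow> 'a \<Rightarrow> 'a \<Rightarrow> 'a \<times> 'a) \<Rightarrow> (nat \<Rightarrow> 'a \<Rightarrow> 'a::real_vector)
   \<Rightarrow> (nat set \<Rightarrow> 'a) \<Rightarrow> (nat set \<Rightarrow> nat) \<Rightarrow> nat set \<Rightarrow> nat \<Rightarrow> 'a" where
  "expert_play Orc g x0 bsz I t = fst (bogd_state Orc g x0 bsz I ((t - Min I) div bsz I))"

definition active :: "nat \<Rightarrow> nat set set" where
  "active t = {I \<in> GC. t \<in> I}"

definition regR :: "(nat \<Rightarrow> 'a \<Rightarrow> real) \<Rightarrow> (nat set \<Rightarrow> nat \<Rightarrow> 'a) \<Rightarrow> (nat \<Rightarrow> 'a) \<Rightarrow> nat set \<Rightarrow> nat \<Rightarrow> real" where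
  "regR f ep X I t = (\<Sum>u\<in>{u \<in> I. u \<le> t}. f u (X u) - f u (ep I u))"

definition regC :: "(nat \<Rightarrow> 'a \<Rightarrow> real) \<Rightarrow> (nat set \<Rightarrow> nat \<Rightarrow> 'a) \<Rightarrow> (nat \<Rightarrow> 'a) \<Rightarrow> nat set \<Rightarrow> nat \<Rightarrow> real" where
  "regC f ep X I t = (\<Sum>u\<in>{u \<in> I. u \<le> t}. \<bar>f u (X u) - f u (ep I u)\<bar>)"

definition pola_step :: "(nat \<Rightarrow> 'a \<Rightarrow> real) \<Rightarrow> (nat set \<Rightarrow> nat \<Rightarrow> 'a::real_vector) \<Rightarrow> (nat \<Rightarrow> 'a) \<Rightarrow> nat \<Rightarrow> 'a" where
  "pola_step f ep X t =
     (let W = (\<Sum>I\<in>active t. wgt (regR f ep X I (t - 1)) (regC f ep X I (t - 1)))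
      in \<Sum>I\<in>active t. (wgt (regR f ep X I (t - 1)) (regC f ep X I (t - 1)) / W) *\<^sub>R ep I t)"

primrec pola_hist :: "(nat \<Rightarrow> 'a \<Rightarrow> real) \<Rightarrow> (nat set \<Rightarrow> nat \<Rightarrow> 'a::real_vector) \<Rightarrow> nat \<Rightarrow> nat \<Rightarrow> 'a" where
  "pola_hist f ep 0 = (\<lambda>u. 0)"
| "pola_hist f ep (Suc t) = (pola_hist f ep t)(Suc t := pola_step f ep (pola_hist f ep t) (Suc t))"

definition pola_play :: "(nat \<Rightarrow> 'a \<Rightarrow> real) \<Rightarrow> (nat set \<Rightarrow> nat \<Rightarrow> 'a::real_vector) \<Rightarrow> nat \<Rightarrow> 'a" where
  "pola_play f ep t = pola_hist f ep t t"

definition cbound :: "nat \<Rightarrow> real" where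
  "cbound j = 1 + ln (real j) + ln (1 + log 2 (real j)) + ln ((5 + 3 * ln (1 + real j)) / 2)"

end

theory Submission
  imports Defs "HOL-Probability.Hoeffding"
begin



lemma Phi_ge1: "C \<ge> 0 \<Longrightarrow> Phi R C \<ge> 1"
  unfolding Phi_def by simp

lemma Phi_mono: assumes "R \<le> R'" "C \<ge> 0" shows "Phi R C \<le> Phi R' C"
proof -
  have "(max 0 R)^2 \<le> (max 0 R')^2" using assms by (intro power_mono) auto
  then have "(max 0 R)^2 / (3*C) \<le> (max 0 R')^2 / (3*C)" using assms by (intro divide_right_mono) auto
  then show ?thesis unfolding Phi_def by simp
qed

lemma wgt_nonneg: "C \<ge> 0 \<Longrightarrow> wgt R C \<ge> 0"
  unfolding wgt_def using Phi_mono[of "R - 1" "R + 1" "C + 1"] by simp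

lemma cosh_bound:
  fixes y m :: real assumes "y \<ge> 0"
  shows "(exp (m + y) + exp (m - y)) / 2 \<le> exp (m + y^2/2)"
proof -
  have h: "- (2*y) * (1/2) + ln (1 + (1/2) * (exp (2*y) - 1)) \<le> (2*y)^2/8"
    using Hoeffdings_lemma_aux[of "2*y" "1/2"] assms by simp
  have pos: "1 + (1/2) * (exp (2*y) - 1) > 0" proof -
    have "exp (2*y) > 0" by simp
    then have "0 < 1 + exp (2*y)" by (smt (verit))
    then show ?thesis by (simp add: field_simps)
  qed
  have "ln (1 + (1/2) * (exp (2*y) - 1)) \<le> y + y^2/2" using h by (simp add: power2_eq_square)
  then have "1 + (1/2) * (exp (2*y) - 1) \<le> exp (y + y^2/2)"
    using pos by (metis exp_le_cancel_iff exp_ln)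
  then have "(1 + exp (2*y))/2 \<le> exp (y + y^2/2)" by (simp add: field_simps)
  then have "exp (m - y) * ((1 + exp (2*y))/2) \<le> exp (m - y) * exp (y + y^2/2)"
    by (intro mult_left_mono) auto
  moreover have "exp (m - y) * ((1 + exp (2*y))/2) = (exp (m + y) + exp (m - y)) / 2"
    by (simp add: field_simps flip: exp_add)
  moreover have "exp (m - y) * exp (y + y^2/2) = exp (m + y^2/2)"
    by (simp flip: exp_add)
  ultimately show ?thesis by simp
qed

lemma regionII:
  fixes R C :: real assumes "1 \<le> R" "R \<le> C"
  shows "(Phi (R+1) (C+1) + Phi (R-1) (C+1))/2 - Phi R C \<le> 3/(2*(C+1))"
proof -
  define c where "c = C + 1"
  have c1: "c \<ge> 2" using assms c_def by simp
  define m where "m = (R^2+1)/(3*c)"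
  define y where "y = 2*R/(3*c)"
  define q where "q = R^2/(3*C)"
  have e1: "m + y = (R+1)^2/(3*c)" unfolding m_def y_def using c1
    by (simp add: field_simps power2_eq_square)
  have e2: "m - y = (R-1)^2/(3*c)" unfolding m_def y_def using c1
    by (simp add: field_simps power2_eq_square)
  have "Phi (R+1) (C+1) = exp (m + y)" unfolding Phi_def e1 c_def using assms
    by (simp add: max_def)
  moreover have "Phi (R-1) (C+1) = exp (m - y)" unfolding Phi_def e2 c_def using assms
    by (simp add: max_def)
  moreover have "Phi R C = exp q" unfolding Phi_def q_def using assms by (simp add: max_def)
  ultimately have A: "(Phi (R+1) (C+1) + Phi (R-1) (C+1))/2 \<le> exp (m + y^2/2)"
    and P: "Phi R C = exp q"
    using cosh_bound[of y m] assms y_def c1 by auto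
  define \<delta> where "\<delta> = m + y^2/2 - q"
  have Cc: "C = c - 1" using c_def by simp
  have dl: "\<delta> = 1/(3*c) - R^2*(c+2)/(9*c^2*(c-1))"
    unfolding \<delta>_def m_def y_def q_def Cc using c1
    by (simp add: field_simps power2_eq_square)
  show ?thesis
  proof (cases "\<delta> \<le> 0")
    case True
    then have "exp (m + y^2/2) \<le> exp q" unfolding \<delta>_def by simp
    then show ?thesis using A P c1 c_def by (smt (verit) divide_nonneg_pos)
  next
    case False
    have t: "R^2*(c+2)/(9*c^2*(c-1)) \<ge> 0" using c1 by simp
    have d1: "\<delta> \<le> 1/(3*c)" using dl t by simp
    have "R^2*(c+2)/(9*c^2*(c-1)) < 1/(3*c)" using dl False by simp
    then have "R^2*(c+2) < (1/(3*c)) * (9*c^2*(c-1))"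
      using c1 by (subst (asm) pos_divide_less_eq) auto
    also have "(1/(3*c)) * (9*c^2*(c-1)) = 3*c*(c-1)" using c1 by (simp add: field_simps power2_eq_square)
    finally have "R^2*(c+2) < 3*c*(c-1)" .
    moreover have "3*c*(c-1) \<le> 3*(c-1)*(c+2)" using c1 by (simp add: algebra_simps)
    ultimately have "R^2 * (c+2) < 3*(c-1) * (c+2)" by linarith
    then have "R^2 < 3*(c-1)" using c1 by simp
    then have q1: "q < 1" unfolding q_def Cc using c1 by simp
    have q0: "q \<ge> 0" unfolding q_def using assms by simp
    have eq: "exp q \<le> 3" using exp_bound[of 1] q1 q0
      by (smt (verit) exp_le_cancel_iff numeral_One power_one)
    have "1/(3*c) \<le> 1" using c1 by simp
    then have d0: "0 \<le> \<delta>" "\<delta> \<le> 1" using False d1 by auto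
    have "exp \<delta> \<le> 1 + \<delta> + \<delta>^2" using exp_bound d0 by blast
    moreover have "\<delta>^2 \<le> \<delta> * (1/6)" using d0 d1 c1
      by (smt (verit) divide_le_eq_1_pos mult_left_mono power2_eq_square frac_le zero_less_divide_1_iff)
    ultimately have ed: "exp \<delta> - 1 \<le> (7/6) * \<delta>" by simp
    have "exp (m + y^2/2) = exp q * exp \<delta>" unfolding \<delta>_def by (simp flip: exp_add)
    then have "exp (m + y^2/2) - exp q = exp q * (exp \<delta> - 1)" by (simp add: algebra_simps)
    also have "\<dots> \<le> 3 * ((7/6) * \<delta>)"
      using eq ed d0 by (intro mult_mono) auto
    also have "\<dots> \<le> 3 * ((7/6) * (1/(3*c)))" using d1 by simp
    also have "\<dots> \<le> 3/(2*c)" using c1 by (simp add: field_simps)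
    finally show ?thesis using A P c_def by (smt (verit))
  qed
qed




lemma regionI:
  fixes R C :: real assumes "R \<le> 1" "R \<le> C" "C \<ge> 0"
  shows "(Phi (R+1) (C+1) + Phi (R-1) (C+1))/2 - Phi R C \<le> 3/(2*(C+1))"
proof -
  define c where "c = C + 1"
  have c1: "c \<ge> 1" using assms c_def by simp
  define u where "u = max 0 (R+1)"
  define x where "x = u^2/(3*c)"
  have m1: "Phi (R-1) (C+1) = 1" unfolding Phi_def using assms by (simp add: max_def)
  have p0: "Phi R C \<ge> 1" using Phi_ge1 assms by simp
  have px: "Phi (R+1) (C+1) = exp x" unfolding Phi_def x_def u_def c_def by simp
  have u0: "0 \<le> u" "u \<le> 2" "u \<le> c" using assms unfolding u_def c_def by auto
  have uu1: "u^2 \<le> 4" using power_mono[of u 2 2] u0 by simp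
  have uu2: "u^2 \<le> c^2" using u0 by (intro power_mono) auto
  have x0: "0 \<le> x" unfolding x_def using c1 by simp
  have x1: "x \<le> 4/(3*c)" unfolding x_def using uu1 c1 by (intro divide_right_mono) auto
  have x2: "x \<le> c/3" unfolding x_def using uu2 c1 by (simp add: field_simps power2_eq_square)
  have xle: "x \<le> 1"
  proof (cases "c \<ge> 4/3")
    case True then have "4/(3*c) \<le> 1" by (simp add: field_simps)
    then show ?thesis using x1 by simp
  next
    case False then show ?thesis using x2 by simp
  qed
  have "exp x \<le> 1 + x + x^2" using exp_bound x0 xle by blast
  moreover have "x^2 \<le> x * 1" using mult_left_mono[of x 1 x] x0 xle by (simp add: power2_eq_square)
  moreover have "2 * x \<le> 8/(3*c)" using x1 by simp
  moreover have "8/(3*c) \<le> 3/c" using c1 by (simp add: field_simps)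
  ultimately have "exp x - 1 \<le> 3/c" by simp
  then have "(exp x - 1)/2 \<le> (3/c)/2" by (intro divide_right_mono) auto
  also have "(3/c)/2 = 3/(2*(C+1))" by (simp add: c_def)
  finally have "(exp x - 1)/2 \<le> 3/(2*(C+1))" .
  then show ?thesis using m1 p0 px unfolding add_divide_distrib diff_divide_distrib by linarith
qed

lemma A_bound:
  fixes R C :: real assumes "R \<le> C" "C \<ge> 0"
  shows "(Phi (R+1) (C+1) + Phi (R-1) (C+1))/2 - Phi R C \<le> 3/(2*(C+1))"
  using regionI regionII assms by (cases "R \<le> 1") auto

lemma cs_ineq:
  fixes a b u0 u1 p0 p1 :: real
  assumes "a \<ge> 0" "b \<ge> 0" "p0 > 0" "p1 > 0"
  shows "(a*u0 + b*u1)^2 \<le> (a*p0 + b*p1) * (a*u0^2/p0 + b*u1^2/p1)"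
proof -
  define x0 where "x0 = u0/p0"
  define x1 where "x1 = u1/p1"
  have u: "u0 = p0*x0" "u1 = p1*x1" using assms unfolding x0_def x1_def by auto
  have r: "a*u0^2/p0 = a*p0*x0^2" "b*u1^2/p1 = b*p1*x1^2" using assms unfolding u
    by (simp_all add: power2_eq_square)
  have "(a*p0 + b*p1) * (a*p0*x0^2 + b*p1*x1^2) - (a*(p0*x0) + b*(p1*x1))^2 = a*b*p0*p1*(x0-x1)^2"
    by (simp add: power2_eq_square algebra_simps)
  moreover have "a*b*p0*p1*(x0-x1)^2 \<ge> 0" using assms by simp
  ultimately show ?thesis unfolding r unfolding u by linarith
qed

lemma aux_cancel3: "(a::real) \<noteq> 0 \<Longrightarrow> a*z/(3*a) = z/3" by (simp add: field_simps)

lemma aux3: "((a::real)*x/C + b*y/D)/3 = a*(x/(3*C)) + b*(y/(3*D))"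
  by (simp add: add_divide_distrib mult.commute mult.left_commute)

lemma conv_step:
  fixes R C s \<sigma> :: real
  assumes "C \<ge> 0" "R \<le> C" "0 \<le> s" "s \<le> 1" "\<sigma> = 1 \<or> \<sigma> = -1"
  shows "Phi (R + \<sigma> * s) (C + s) \<le> (1-s) * Phi R C + s * Phi (R+\<sigma>) (C+1)"
proof -
  define u0 where "u0 = max 0 R"
  define u1 where "u1 = max 0 (R+\<sigma>)"
  define us where "us = max 0 (R+\<sigma> * s)"
  have R\<sigma>: "R + \<sigma> * s = (1-s)*R + s*(R+\<sigma>)" by (simp add: algebra_simps)
  have usle: "us \<le> (1-s)*u0 + s*u1"
  proof -
    have a: "(1-s)*R \<le> (1-s)*u0" unfolding u0_def using assms(4) by (intro mult_left_mono) auto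
    have b: "s*(R+\<sigma>) \<le> s*u1" unfolding u1_def using assms(3) by (intro mult_left_mono) auto
    have c: "0 \<le> (1-s)*u0 + s*u1" unfolding u0_def u1_def using assms(3,4) by simp
    show ?thesis unfolding us_def R\<sigma> using a b c by simp
  qed
  have us0: "0 \<le> us" unfolding us_def by simp
  have u00: "0 \<le> u0" "0 \<le> u1" unfolding u0_def u1_def by auto
  define e0 where "e0 = u0^2/(3*C)"
  define e1 where "e1 = u1^2/(3*(C+1))"
  have key: "us^2/(3*(C+s)) \<le> (1-s)*e0 + s*e1"
  proof (cases "s = 0")
    case True then show ?thesis unfolding us_def e0_def u0_def by simp
  next
    case s0: False
    have sq: "us^2 \<le> ((1-s)*u0 + s*u1)^2" using usle us0 by (intro power_mono) auto
    show ?thesis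
    proof (cases "C = 0")
      case True
      then have "u0 = 0" using assms unfolding u0_def by simp
      then have "us^2 \<le> (s*u1)^2" using sq by simp
      then have "us^2/(3 * s) \<le> (s*u1)^2/(3 * s)" using s0 assms by (intro divide_right_mono) auto
      also have "\<dots> = s*(u1^2/3)" using s0 by (simp add: field_simps power2_eq_square)
      finally show ?thesis using True unfolding e0_def e1_def by simp
    next
      case False
      then have Cp: "C > 0" using assms by simp
      have "((1-s)*u0 + s*u1)^2 \<le> ((1-s)*C + s*(C+1)) * ((1-s)*u0^2/C + s*u1^2/(C+1))"
        using cs_ineq[of "1-s" s C "C+1" u0 u1] assms Cp by simp
      also have "(1-s)*C + s*(C+1) = C + s" by (simp add: algebra_simps)
      finally have "us^2 \<le> (C+s) * ((1-s)*u0^2/C + s*u1^2/(C+1))" using sq by simp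
      then have "us^2/(3*(C+s)) \<le> (C+s) * ((1-s)*u0^2/C + s*u1^2/(C+1))/(3*(C+s))"
        using Cp assms by (intro divide_right_mono) auto
      also have "\<dots> = ((1-s)*u0^2/C + s*u1^2/(C+1))/3" using Cp assms by (intro aux_cancel3) simp
      also have "\<dots> = (1-s)*e0 + s*e1" unfolding e0_def e1_def by (rule aux3)
      finally show ?thesis .
    qed
  qed
  have "Phi (R + \<sigma> * s) (C + s) = exp (us^2/(3*(C+s)))" unfolding Phi_def us_def by simp
  also have "\<dots> \<le> exp ((1-s)*e0 + s*e1)" using key by simp
  also have "\<dots> \<le> (1-s) * exp e0 + s * exp e1"
    using convex_onD[OF exp_convex, of s e0 e1] assms by simp
  also have "exp e0 = Phi R C" unfolding e0_def u0_def Phi_def by simp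
  also have "exp e1 = Phi (R+\<sigma>) (C+1)" unfolding e1_def u1_def Phi_def by simp
  finally show ?thesis .
qed

lemma pot_step:
  fixes R C r :: real
  assumes "C \<ge> 0" "R \<le> C" "\<bar>r\<bar> \<le> 1"
  shows "Phi (R + r) (C + \<bar>r\<bar>) \<le> Phi R C + wgt R C * r + 3*\<bar>r\<bar>/(2*(C+1))"
proof -
  define s where "s = \<bar>r\<bar>"
  define P1 where "P1 = Phi (R+1) (C+1)"
  define P2 where "P2 = Phi (R-1) (C+1)"
  define P0 where "P0 = Phi R C"
  define B where "B = 3/(2*(C+1))"
  have s: "0 \<le> s" "s \<le> 1" using assms s_def by auto
  have Ab: "(P1 + P2)/2 - P0 \<le> B"
    using A_bound assms unfolding P1_def P2_def P0_def B_def by simp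
  have Ab2: "s * ((P1 + P2)/2 - P0) \<le> s * B" using Ab s by (intro mult_left_mono) auto
  have w: "wgt R C = (P1 - P2)/2" unfolding wgt_def P1_def P2_def ..
  have B3: "3*\<bar>r\<bar>/(2*(C+1)) = s * B" unfolding s_def B_def by simp
  show ?thesis
  proof (cases "r \<ge> 0")
    case True
    then have r: "r = 1 * s" unfolding s_def by simp
    have cs: "Phi (R + 1 * s) (C + s) \<le> (1-s) * P0 + s * P1"
      using conv_step[OF assms(1,2) s, of 1] unfolding P0_def P1_def by simp
    have "(1-s) * P0 + s * P1 = P0 + (P1 - P2)/2 * s + s * ((P1 + P2)/2 - P0)"
      by (simp add: algebra_simps add_divide_distrib diff_divide_distrib)
    moreover have "Phi (R + r) (C + \<bar>r\<bar>) = Phi (R + 1 * s) (C + s)" unfolding s_def using True by simp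
    ultimately have "Phi (R + r) (C + \<bar>r\<bar>) \<le> P0 + (P1 - P2)/2 * (1 * s) + s * ((P1 + P2)/2 - P0)"
      using cs by simp
    moreover have "(P1 - P2)/2 * (1 * s) = wgt R C * r" using w r by simp
    ultimately show ?thesis using Ab2 B3 unfolding P0_def by linarith
  next
    case False
    then have r: "r = -1 * s" unfolding s_def by simp
    have cs: "Phi (R + -1 * s) (C + s) \<le> (1-s) * P0 + s * P2"
      using conv_step[OF assms(1,2) s, of "-1"] unfolding P0_def P2_def by simp
    have "(1-s) * P0 + s * P2 = P0 + (P1 - P2)/2 * (-1 * s) + s * ((P1 + P2)/2 - P0)"
      by (simp add: algebra_simps add_divide_distrib diff_divide_distrib)
    moreover have "Phi (R + r) (C + \<bar>r\<bar>) = Phi (R + -1 * s) (C + s)" unfolding s_def using False by simp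
    ultimately have "Phi (R + r) (C + \<bar>r\<bar>) \<le> P0 + (P1 - P2)/2 * (-1 * s) + s * ((P1 + P2)/2 - P0)"
      using cs by simp
    moreover have "(P1 - P2)/2 * (-1 * s) = wgt R C * r" using w r by simp
    ultimately show ?thesis using Ab2 B3 unfolding P0_def by linarith
  qed
qed




lemma GC_E: assumes "I \<in> GC" obtains i k where "i \<ge> 1" "I = {i*2^k .. (i+1)*2^k - 1}"
  using assms unfolding GC_def by auto

lemma GC_props: assumes "I \<in> GC"
  shows "finite I" "I \<noteq> {}" "0 \<notin> I" "card I \<ge> 1"
proof -
  obtain i k where ik: "i \<ge> 1" "I = {i*2^k .. (i+1)*2^k - 1}" using GC_E assms by blast
  have p: "(2::nat)^k \<ge> 1" by simp
  have le: "i*2^k \<le> (i+1)*2^k - 1"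
  proof -
    have "i*2^k + 1 \<le> (i+1)*2^k" using p by simp
    then show ?thesis by linarith
  qed
  show "finite I" using ik by simp
  show ne: "I \<noteq> {}" using ik le by auto
  have "i*2^k \<ge> 1" using ik(1) by (simp add: Suc_le_eq)
  then show "0 \<notin> I" using ik by auto
  show "card I \<ge> 1" using ne \<open>finite I\<close> by (simp add: Suc_le_eq card_gt_0_iff)
qed

lemma GC_Min: assumes "I \<in> GC" "u \<in> I" shows "Min I \<le> u"
  using GC_props[OF assms(1)] assms(2) by simp

definition EE :: "nat \<Rightarrow> nat set set" where "EE t = {I \<in> GC. Min I \<le> t}"

lemma EE_sub: "EE t \<subseteq> (\<lambda>(k,i). {i*2^k .. (i+1)*2^k - 1}) ` (SIGMA k:{..<t}. {1..t div 2^k})"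
proof
  fix I assume "I \<in> EE t"
  then have I: "I \<in> GC" "Min I \<le> t" unfolding EE_def by auto
  obtain i k where ik: "i \<ge> 1" "I = {i*2^k .. (i+1)*2^k - 1}" using GC_E I(1) by blast
  have p: "(2::nat)^k \<ge> 1" by simp
  have le: "i*2^k \<le> (i+1)*2^k - 1"
  proof -
    have "i*2^k + 1 \<le> (i+1)*2^k" using p by simp
    then show ?thesis by linarith
  qed
  have "Min I = i*2^k" using ik le by (intro Min_eqI) auto
  then have it: "i*2^k \<le> t" using I by simp
  have "2^k \<le> i*2^k" using ik by simp
  then have "k < 2^k \<and> 2^k \<le> t" using it less_exp[of k] by linarith
  then have k: "k < t" by linarith
  have "i \<le> t div 2^k" using it by (simp add: less_eq_div_iff_mult_less_eq)
  then show "I \<in> (\<lambda>(k,i). {i*2^k .. (i+1)*2^k - 1}) ` (SIGMA k:{..<t}. {1..t div 2^k})"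
    using ik k by (auto intro!: image_eqI[where x="(k,i)"])
qed

lemma EE_finite: "finite (EE t)"
  by (rule finite_subset[OF EE_sub]) auto

lemma EE_card: "real (card (EE t)) \<le> 2 * real t"
proof -
  have "card (EE t) \<le> card ((\<lambda>(k,i). {i*2^k .. (i+1)*2^k - 1}) ` (SIGMA k:{..<t}. {1..t div 2^k}))"
    by (rule card_mono[OF _ EE_sub]) auto
  also have "\<dots> \<le> card (SIGMA k:{..<t}. {1..t div 2^k})" by (rule card_image_le) auto
  also have "\<dots> = (\<Sum>k<t. t div 2^k)" by (simp add: card_SigmaI)
  finally have "real (card (EE t)) \<le> (\<Sum>k<t. real (t div 2^k))" by (simp flip: of_nat_sum)
  also have "\<dots> \<le> (\<Sum>k<t. real t * (1/2)^k)"
  proof (intro sum_mono)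
    fix k show "real (t div 2^k) \<le> real t * (1/2)^k"
      using of_nat_div_le_of_nat[of t "2^k"] by (simp add: power_divide)
  qed
  also have "\<dots> = real t * (\<Sum>k<t. (1/2)^k)" by (simp add: sum_distrib_left)
  also have "(\<Sum>k<t. (1/2::real)^k) \<le> 2"
    using geometric_sum[of "1/2::real" t] by simp
  then have "real t * (\<Sum>k<t. (1/2::real)^k) \<le> real t * 2" by (intro mult_left_mono) auto
  finally show ?thesis by simp
qed

lemma active_sub_EE: "u \<le> t \<Longrightarrow> active u \<subseteq> EE t"
  unfolding active_def EE_def using GC_Min by fastforce

lemma active_finite: "finite (active u)"
  using finite_subset[OF active_sub_EE EE_finite] by blast

lemma active_eq: "u \<le> t \<Longrightarrow> active u = {I \<in> EE t. u \<in> I}"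
  unfolding active_def EE_def using GC_Min by fastforce




lemma sum_le_Suc: "(\<Sum>u\<in>{u\<in>I. u \<le> Suc t}. h u) = (\<Sum>u\<in>{u\<in>I. u \<le> t}. h u) + (if Suc t \<in> I then h (Suc t) else (0::real))"
proof (cases "Suc t \<in> I")
  case True
  then have "{u\<in>I. u \<le> Suc t} = insert (Suc t) {u\<in>I. u \<le> t}" by auto
  then show ?thesis using True by simp
next
  case False
  then have "{u\<in>I. u \<le> Suc t} = {u\<in>I. u \<le> t}" using le_Suc_eq by auto
  then show ?thesis using False by simp
qed

lemma log_step:
  fixes C a :: real assumes "C \<ge> 0" "0 \<le> a" "a \<le> 1"
  shows "a / (C + 1) \<le> 2 * (ln (1 + (C + a)) - ln (1 + C))"
proof -
  define x where "x = (1 + (C + a)) / (1 + C)"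
  have xp: "x > 0" unfolding x_def using assms by simp
  have "ln (1 + (C + a)) - ln (1 + C) = ln x" unfolding x_def using assms by (simp add: ln_div)
  moreover have "ln (1/x) \<le> 1/x - 1" using ln_le_minus_one[of "1/x"] xp by simp
  then have "1 - 1/x \<le> ln x" using xp by (simp add: ln_div)
  moreover have "1 - 1/x = a / (1 + C + a)" unfolding x_def using assms by (simp add: field_simps)
  moreover have "a / (C + 1) \<le> 2 * (a / (1 + C + a))"
  proof -
    have h1: "a*a \<le> a" using mult_left_mono[of a 1 a] assms by simp
    have h2: "0 \<le> C*a" using assms by simp
    have "a*a \<le> a + C*a" using h1 h2 by linarith
    then show ?thesis using assms by (simp add: field_simps)
  qed
  ultimately have e1: "ln (1 + (C + a)) - ln (1 + C) = ln x" and e2: "1 - 1/x \<le> ln x"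
    and e3: "1 - 1/x = a / (1 + C + a)" and e4: "a / (C + 1) \<le> 2 * (a / (1 + C + a))" by blast+
  have "a / (C + 1) \<le> 2 * (1 - 1/x)" using e3 e4 by simp
  also have "\<dots> \<le> 2 * ln x" using e2 by simp
  finally show ?thesis using e1 by simp
qed

lemma cbound_pos: "1 \<le> j \<Longrightarrow> cbound j \<ge> 1"
proof -
  assume j: "1 \<le> j"
  have "ln (real j) \<ge> 0" using j by simp
  moreover have "log 2 (real j) \<ge> 0" using j by simp
  then have "ln (1 + log 2 (real j)) \<ge> 0" by simp
  moreover have "ln (1 + real j) \<ge> 0" by simp
  then have "ln ((5 + 3 * ln (1 + real j)) / 2) \<ge> 0" by simp
  ultimately show ?thesis unfolding cbound_def by linarith
qed

lemma ln_M_bound: assumes j: "1 \<le> j"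
  shows "ln (2 * real j * (1 + 3 * ln (1 + real j))) \<le> cbound j"
proof -
  define L where "L = ln (1 + real j)"
  define lg where "lg = log 2 (real j)"
  have L0: "L > 0" unfolding L_def using j by simp
  have lg0: "lg \<ge> 0" unfolding lg_def using j by simp
  have e2: "exp 1 \<ge> (2::real)" using exp_ge_add_one_self[of 1] by simp
  have key: "2 * (1 + 3*L) \<le> exp 1 * ((1 + lg) * ((5 + 3*L)/2))"
  proof (cases "j = 1")
    case True
    then have "L = ln 2" "lg = 0" unfolding L_def lg_def by simp_all
    then have "L \<le> 1" using ln_2_less_1 by simp
    have "2 * (1 + 3*L) \<le> 2 * ((1 + lg) * ((5 + 3*L)/2))" using \<open>L \<le> 1\<close> \<open>lg = 0\<close> by simp
    also have "\<dots> \<le> exp 1 * ((1 + lg) * ((5 + 3*L)/2))" using e2 lg0 L0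
      by (intro mult_right_mono) auto
    finally show ?thesis .
  next
    case False
    then have "real j \<ge> 2" using j by simp
    then have "lg \<ge> 1" unfolding lg_def by simp
    have m: "L * (lg*6) \<ge> L*6" using mult_left_mono[of 6 "lg*6" L] L0 \<open>lg \<ge> 1\<close> by simp
    have "2 * (1 + 3*L) \<le> 2 * ((1 + lg) * ((5 + 3*L)/2))" using L0
      by (simp add: algebra_simps) (use m \<open>lg \<ge> 1\<close> in linarith)
    also have "\<dots> \<le> exp 1 * ((1 + lg) * ((5 + 3*L)/2))" using e2 lg0 L0
      by (intro mult_right_mono) auto
    finally show ?thesis .
  qed
  have p1: "1 + lg > 0" "(5 + 3*L)/2 > 0" "1 + 3*L > 0" using lg0 L0 by auto
  have "ln (2 * real j * (1 + 3 * L)) = ln (real j * (2 * (1 + 3*L)))"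
    by (rule arg_cong[where f=ln]) simp
  also have "\<dots> = ln (real j) + ln (2 * (1 + 3*L))"
    using j p1 by (intro ln_mult_pos) auto
  also have "ln (2 * (1 + 3*L)) \<le> ln (exp 1 * ((1 + lg) * ((5 + 3*L)/2)))"
    using key p1 by simp
  also have "\<dots> = ln (exp 1) + ln ((1 + lg) * ((5 + 3*L)/2))"
    by (rule ln_mult_pos) (use p1 in auto)
  also have "ln ((1 + lg) * ((5 + 3*L)/2)) = ln (1 + lg) + ln ((5 + 3*L)/2)"
    by (rule ln_mult_pos) (use p1 in auto)
  finally show ?thesis unfolding cbound_def L_def lg_def by simp
qed

lemma lin_helper: "(P'::real) \<le> P + w + e \<Longrightarrow> e = 3/2*q \<Longrightarrow> P \<le> 1 + 3/2*L + S \<Longrightarrow> P' \<le> 1 + 3/2*(L + q) + (S + w)"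
  by (simp add: distrib_left)

lemma lin_helper2: "(q::real) \<le> 2*(a - b) \<Longrightarrow> L \<le> 2*b \<Longrightarrow> L + q \<le> 2*a"
  by (simp add: right_diff_distrib)

locale pola =
  fixes K :: "'a::euclidean_space set" and T :: nat
    and f :: "nat \<Rightarrow> 'a \<Rightarrow> real" and g :: "nat \<Rightarrow> 'a \<Rightarrow> 'a"
    and Orc :: "nat set \<Rightarrow> nat \<Rightarrow> real \<Rightarrow> 'a \<Rightarrow> 'a \<Rightarrow> 'a \<times> 'a"
    and x0 :: "nat set \<Rightarrow> 'a" and bsz :: "nat set \<Rightarrow> nat"
  assumes convK: "convex K" and zeroK: "0 \<in> K"
    and A3c: "\<forall>t\<in>{1..T}. convex_on K (f t)"
    and A4: "\<forall>t\<in>{1..T}. \<forall>x\<in>K. 0 \<le> f t x \<and> f t x \<le> 1"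
    and IPK: "\<And>I m \<epsilon> x y0. \<epsilon> > 0 \<Longrightarrow> x \<in> K \<Longrightarrow> fst (Orc I m \<epsilon> x y0) \<in> K"
    and start: "\<forall>I\<in>GC. x0 I \<in> K"
begin

abbreviation "ep \<equiv> expert_play Orc g x0 bsz"
definition "xs t = pola_play f ep t"
definition "Rr I t = regR f ep xs I t"
definition "Cc I t = regC f ep xs I t"
definition "rr I u = f u (xs u) - f u (ep I u)"
definition "wI I u = wgt (Rr I (u-1)) (Cc I (u-1))"

lemma eta_pos: "I \<in> GC \<Longrightarrow> eta I > 0"
  unfolding eta_def using GC_props(4)[of I] by simp

lemma bogd_K: assumes "I \<in> GC" shows "fst (bogd_state Orc g x0 bsz I m) \<in> K"
proof (induction m)
  case 0 then show ?case using start assms by simp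
next
  case (Suc m)
  obtain x y where xy: "bogd_state Orc g x0 bsz I m = (x, y)" by fastforce
  have e: "eta I powr (2/3) > 0" using eta_pos[OF assms] by simp
  show ?case using Suc xy IPK[OF e] by simp
qed

lemma ep_K: "I \<in> GC \<Longrightarrow> ep I t \<in> K"
  unfolding expert_play_def using bogd_K by blast

lemma hist: "u \<le> t \<Longrightarrow> pola_hist f ep t u = xs u"
proof (induction t arbitrary: u)
  case 0 then show ?case by (simp add: xs_def pola_play_def)
next
  case (Suc t)
  show ?case
  proof (cases "u = Suc t")
    case True then show ?thesis by (simp add: xs_def pola_play_def)
  next
    case False then have "u \<le> t" using Suc by simp
    then show ?thesis using Suc False by simp
  qed
qed

lemma regR_cong: "(\<And>u. u \<le> t \<Longrightarrow> X u = Y u) \<Longrightarrow> regR f ep X I t = regR f ep Y I t"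
  unfolding regR_def by (intro sum.cong) auto

lemma regC_cong: "(\<And>u. u \<le> t \<Longrightarrow> X u = Y u) \<Longrightarrow> regC f ep X I t = regC f ep Y I t"
  unfolding regC_def by (intro sum.cong) auto

definition "WW u = (\<Sum>I\<in>active u. wI I u)"

lemma xs_Suc: "xs (Suc t) = (\<Sum>I\<in>active (Suc t). (wI I (Suc t) / WW (Suc t)) *\<^sub>R ep I (Suc t))"
proof -
  have h: "\<And>u. u \<le> t \<Longrightarrow> pola_hist f ep t u = xs u" using hist by blast
  have "xs (Suc t) = pola_step f ep (pola_hist f ep t) (Suc t)" by (simp add: xs_def pola_play_def)
  also have "\<dots> = (\<Sum>I\<in>active (Suc t). (wI I (Suc t) / WW (Suc t)) *\<^sub>R ep I (Suc t))"
    unfolding pola_step_def Let_def WW_def wI_def Rr_def Cc_def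
    using regR_cong[OF h] regC_cong[OF h] by simp
  finally show ?thesis .
qed

lemma Cc_nonneg: "Cc I t \<ge> 0" unfolding Cc_def regC_def by (intro sum_nonneg) auto

lemma Rr_le_Cc: "\<bar>Rr I t\<bar> \<le> Cc I t" unfolding Cc_def regC_def Rr_def regR_def
  by (rule sum_abs)

lemma wI_nonneg: "wI I u \<ge> 0" unfolding wI_def using wgt_nonneg Cc_nonneg by simp

lemma WW_nonneg: "WW u \<ge> 0" unfolding WW_def using wI_nonneg by (simp add: sum_nonneg)

lemma WW_zero: "WW u = 0 \<Longrightarrow> I \<in> active u \<Longrightarrow> wI I u = 0"
  unfolding WW_def using sum_nonneg_eq_0_iff[where A="active u" and f="\<lambda>I. wI I u"] active_finite wI_nonneg by blast

lemma active_GC: "I \<in> active u \<Longrightarrow> I \<in> GC" unfolding active_def by simp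

lemma xs_K: "xs t \<in> K"
proof (cases t)
  case 0 then show ?thesis using zeroK by (simp add: xs_def pola_play_def)
next
  case (Suc t')
  show ?thesis
  proof (cases "WW t = 0")
    case True
    then have "xs t = 0" unfolding Suc xs_Suc using WW_zero Suc by (intro sum.neutral) simp
    then show ?thesis using zeroK by simp
  next
    case False
    then have Wp: "WW t > 0" using WW_nonneg[of t] by simp
    have "(\<Sum>I\<in>active t. wI I t / WW t) = 1"
      using Wp unfolding sum_divide_distrib[symmetric] WW_def by simp
    then show ?thesis unfolding Suc xs_Suc
      using Wp wI_nonneg ep_K active_GC Suc
      by (intro convex_sum[OF active_finite convK]) auto
  qed
qed

lemma jensen: assumes "u \<in> {1..T}" shows "(\<Sum>I\<in>active u. wI I u * rr I u) \<le> 0"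
proof -
  obtain t' where u: "u = Suc t'" using assms by (cases u) auto
  show ?thesis
  proof (cases "WW u = 0")
    case True then show ?thesis using WW_zero by simp
  next
    case False
    then have Wp: "WW u > 0" using WW_nonneg[of u] by simp
    have s1: "(\<Sum>I\<in>active u. wI I u / WW u) = 1"
      using Wp unfolding sum_divide_distrib[symmetric] WW_def by simp
    have ne: "active u \<noteq> {}" using False unfolding WW_def by auto
    have xu: "xs u = (\<Sum>I\<in>active u. (wI I u / WW u) *\<^sub>R ep I u)" using xs_Suc u by simp
    have cvx: "convex_on K (f u)" using A3c assms by blast
    have "f u (xs u) \<le> (\<Sum>I\<in>active u. (wI I u / WW u) * f u (ep I u))"
      unfolding xu
      by (rule convex_on_sum[OF active_finite ne cvx s1]) (use Wp wI_nonneg ep_K active_GC in auto)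
    then have "WW u * f u (xs u) \<le> WW u * (\<Sum>I\<in>active u. (wI I u / WW u) * f u (ep I u))"
      using Wp by simp
    also have "\<dots> = (\<Sum>I\<in>active u. wI I u * f u (ep I u))"
      using Wp by (simp add: sum_distrib_left)
    finally have "WW u * f u (xs u) \<le> (\<Sum>I\<in>active u. wI I u * f u (ep I u))" .
    moreover have "(\<Sum>I\<in>active u. wI I u * rr I u) = WW u * f u (xs u) - (\<Sum>I\<in>active u. wI I u * f u (ep I u))"
      unfolding rr_def WW_def by (simp add: algebra_simps sum_subtractf sum_distrib_left sum_distrib_right mult.commute)
    ultimately show ?thesis by simp
  qed
qed


lemma Rr_Suc: "Rr I (Suc t) = Rr I t + (if Suc t \<in> I then rr I (Suc t) else 0)"
  unfolding Rr_def regR_def rr_def by (rule sum_le_Suc)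

lemma Cc_Suc: "Cc I (Suc t) = Cc I t + (if Suc t \<in> I then \<bar>rr I (Suc t)\<bar> else 0)"
  unfolding Cc_def regC_def rr_def by (rule sum_le_Suc)

lemma GC_ge1: "I \<in> GC \<Longrightarrow> u \<in> I \<Longrightarrow> 1 \<le> u"
  using GC_props(3)[of I] by (cases u) auto

lemma empty0: "I \<in> GC \<Longrightarrow> {u\<in>I. u \<le> 0} = {}" using GC_props(3)[of I] by auto

lemma Rr_0: assumes "I \<in> GC" shows "Rr I 0 = 0" unfolding Rr_def regR_def empty0[OF assms] by simp

lemma Cc_0: assumes "I \<in> GC" shows "Cc I 0 = 0" unfolding Cc_def regC_def empty0[OF assms] by simp

lemma rr_bound: assumes "I \<in> GC" "u \<in> {1..T}" shows "\<bar>rr I u\<bar> \<le> 1"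
proof -
  have a: "0 \<le> f u (xs u) \<and> f u (xs u) \<le> 1" using A4 xs_K assms(2) by blast
  have b: "0 \<le> f u (ep I u) \<and> f u (ep I u) \<le> 1" using A4 ep_K[OF assms(1)] assms(2) by blast
  show ?thesis unfolding rr_def using a b by (simp add: abs_le_iff)
qed

definition "LS I t = (\<Sum>u\<in>{u\<in>I. u \<le> t}. \<bar>rr I u\<bar> / (Cc I (u-1) + 1))"
definition "SS I t = (\<Sum>u\<in>{u\<in>I. u \<le> t}. wI I u * rr I u)"

lemma LS_Suc: "LS I (Suc t) = LS I t + (if Suc t \<in> I then \<bar>rr I (Suc t)\<bar> / (Cc I t + 1) else 0)"
  unfolding LS_def using sum_le_Suc[of "\<lambda>u. \<bar>rr I u\<bar> / (Cc I (u-1) + 1)" I t] by simp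

lemma SS_Suc: "SS I (Suc t) = SS I t + (if Suc t \<in> I then wgt (Rr I t) (Cc I t) * rr I (Suc t) else 0)"
  unfolding SS_def using sum_le_Suc[of "\<lambda>u. wI I u * rr I u" I t] by (simp add: wI_def)

lemma LS_0: assumes "I \<in> GC" shows "LS I 0 = 0" unfolding LS_def empty0[OF assms] by simp

lemma SS_0: assumes "I \<in> GC" shows "SS I 0 = 0" unfolding SS_def empty0[OF assms] by simp

lemma per_expert: assumes "I \<in> GC" shows "t \<le> T \<Longrightarrow> Phi (Rr I t) (Cc I t) \<le> 1 + 3/2 * LS I t + SS I t"
proof (induction t)
  case 0 then show ?case using assms by (simp add: Rr_0 Cc_0 LS_0 SS_0 Phi_def)
next
  case (Suc t)
  then have IH: "Phi (Rr I t) (Cc I t) \<le> 1 + 3/2 * LS I t + SS I t" by simp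
  show ?case
  proof (cases "Suc t \<in> I")
    case False then show ?thesis using IH by (simp add: Rr_Suc Cc_Suc LS_Suc SS_Suc)
  next
    case True
    have r1: "\<bar>rr I (Suc t)\<bar> \<le> 1" using rr_bound assms Suc by simp
    have eR: "Rr I (Suc t) = Rr I t + rr I (Suc t)" using True Rr_Suc by simp
    have eC: "Cc I (Suc t) = Cc I t + \<bar>rr I (Suc t)\<bar>" using True Cc_Suc by simp
    have eL: "LS I (Suc t) = LS I t + \<bar>rr I (Suc t)\<bar> / (Cc I t + 1)" using True LS_Suc by simp
    have eS: "SS I (Suc t) = SS I t + wgt (Rr I t) (Cc I t) * rr I (Suc t)" using True SS_Suc by simp
    have RC: "Rr I t \<le> Cc I t" using Rr_le_Cc[of I t] by (simp add: abs_le_iff)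
    have P: "Phi (Rr I t + rr I (Suc t)) (Cc I t + \<bar>rr I (Suc t)\<bar>)
          \<le> Phi (Rr I t) (Cc I t) + wgt (Rr I t) (Cc I t) * rr I (Suc t) + 3*\<bar>rr I (Suc t)\<bar>/(2*(Cc I t+1))"
      by (rule pot_step[OF Cc_nonneg RC r1])
    have "3*\<bar>rr I (Suc t)\<bar>/(2*(Cc I t+1)) = 3/2 * (\<bar>rr I (Suc t)\<bar> / (Cc I t + 1))" by simp
    then show ?thesis unfolding eR eC eL eS using lin_helper[OF P _ IH] by blast
  qed
qed

lemma LS_bound: assumes "I \<in> GC" shows "t \<le> T \<Longrightarrow> LS I t \<le> 2 * ln (1 + Cc I t)"
proof (induction t)
  case 0 then show ?case using assms by (simp add: LS_0 Cc_0)
next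
  case (Suc t)
  then have IH: "LS I t \<le> 2 * ln (1 + Cc I t)" by simp
  show ?case
  proof (cases "Suc t \<in> I")
    case False then show ?thesis using IH by (simp add: Cc_Suc LS_Suc)
  next
    case True
    have r1: "\<bar>rr I (Suc t)\<bar> \<le> 1" using rr_bound assms Suc by simp
    have eC: "Cc I (Suc t) = Cc I t + \<bar>rr I (Suc t)\<bar>" using True Cc_Suc by simp
    have eL: "LS I (Suc t) = LS I t + \<bar>rr I (Suc t)\<bar> / (Cc I t + 1)" using True LS_Suc by simp
    have st: "\<bar>rr I (Suc t)\<bar> / (Cc I t + 1) \<le> 2 * (ln (1 + (Cc I t + \<bar>rr I (Suc t)\<bar>)) - ln (1 + Cc I t))"
      using log_step[OF Cc_nonneg _ r1] by simp
    show ?thesis unfolding eC eL using lin_helper2[OF st IH] .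
  qed
qed

lemma Cc_le: assumes "I \<in> GC" "t \<le> T" shows "Cc I t \<le> real (card {u\<in>I. u \<le> t})"
proof -
  have "Cc I t = (\<Sum>u\<in>{u\<in>I. u \<le> t}. \<bar>rr I u\<bar>)" unfolding Cc_def regC_def rr_def ..
  also have "\<dots> \<le> (\<Sum>u\<in>{u\<in>I. u \<le> t}. 1)"
  proof (intro sum_mono)
    fix u assume "u \<in> {u\<in>I. u \<le> t}"
    then have "1 \<le> u" "u \<le> t" using GC_ge1[OF assms(1)] by auto
    then show "\<bar>rr I u\<bar> \<le> 1" using rr_bound assms by simp
  qed
  finally show ?thesis by simp
qed

lemma Cc_le_t: assumes "I \<in> GC" "t \<le> T" shows "Cc I t \<le> real t"
proof -
  have sub: "{u\<in>I. u \<le> t} \<subseteq> {1..t}"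
  proof
    fix u assume "u \<in> {u\<in>I. u \<le> t}"
    then show "u \<in> {1..t}" using GC_ge1[OF assms(1)] by auto
  qed
  have "card {u\<in>I. u \<le> t} \<le> card {1..t}" by (rule card_mono[OF _ sub]) simp
  then have "card {u\<in>I. u \<le> t} \<le> t" by simp
  then show ?thesis using Cc_le[OF assms] by linarith
qed

lemma per_expert2: assumes "I \<in> GC" "t \<le> T"
  shows "Phi (Rr I t) (Cc I t) \<le> 1 + 3 * ln (1 + real t) + SS I t"
proof -
  have "ln (1 + Cc I t) \<le> ln (1 + real t)" using Cc_le_t[OF assms] Cc_nonneg[of I t]
    by (subst ln_le_cancel_iff) auto
  then show ?thesis using per_expert[OF assms(1) assms(2)] LS_bound[OF assms(1) assms(2)] by linarith
qed

lemma SS_total: assumes "t \<le> T" shows "(\<Sum>I\<in>EE t. SS I t) \<le> 0"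
proof -
  have "(\<Sum>I\<in>EE t. SS I t) = (\<Sum>I\<in>EE t. \<Sum>u\<in>{1..t}. if u \<in> I then wI I u * rr I u else 0)"
  proof (rule sum.cong[OF refl])
    fix I assume "I \<in> EE t"
    then have "I \<in> GC" unfolding EE_def by auto
    then have eq: "{u\<in>I. u \<le> t} = {u\<in>{1..t}. u \<in> I}" using GC_ge1 by auto
    show "SS I t = (\<Sum>u\<in>{1..t}. if u \<in> I then wI I u * rr I u else 0)"
      unfolding SS_def eq by (rule sum.inter_filter) simp
  qed
  also have "\<dots> = (\<Sum>u\<in>{1..t}. \<Sum>I\<in>EE t. if u \<in> I then wI I u * rr I u else 0)"
    by (rule sum.swap)
  also have "\<dots> = (\<Sum>u\<in>{1..t}. \<Sum>I\<in>active u. wI I u * rr I u)"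
  proof (rule sum.cong[OF refl])
    fix u assume u: "u \<in> {1..t}"
    have "(\<Sum>I\<in>EE t. if u \<in> I then wI I u * rr I u else 0) = (\<Sum>I\<in>{I\<in>EE t. u \<in> I}. wI I u * rr I u)"
      by (simp add: sum.inter_filter EE_finite)
    also have "{I\<in>EE t. u \<in> I} = active u" using active_eq[of u t] u by simp
    finally show "(\<Sum>I\<in>EE t. if u \<in> I then wI I u * rr I u else 0) = (\<Sum>I\<in>active u. wI I u * rr I u)" .
  qed
  also have "\<dots> \<le> 0" using assms by (intro sum_nonpos jensen) auto
  finally show ?thesis .
qed

lemma total_pot: assumes "t \<le> T"
  shows "(\<Sum>I\<in>EE t. Phi (Rr I t) (Cc I t)) \<le> real (card (EE t)) * (1 + 3 * ln (1 + real t))"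
proof -
  have "(\<Sum>I\<in>EE t. Phi (Rr I t) (Cc I t)) \<le> (\<Sum>I\<in>EE t. (1 + 3 * ln (1 + real t)) + SS I t)"
    using per_expert2 assms unfolding EE_def by (intro sum_mono) auto
  also have "\<dots> = real (card (EE t)) * (1 + 3 * ln (1 + real t)) + (\<Sum>I\<in>EE t. SS I t)"
    by (simp add: sum.distrib)
  finally show ?thesis using SS_total[OF assms] by linarith
qed

lemma meta_regret: assumes J: "J \<in> GC" "J \<subseteq> {..j}" and j: "1 \<le> j" "j \<le> T"
  shows "Rr J j \<le> sqrt (3 * cbound j) * sqrt (real (card J))"
proof -
  have cb0: "cbound j \<ge> 0" using cbound_pos[OF j(1)] by simp
  show ?thesis
  proof (cases "Rr J j \<le> 0")
    case True
    have "0 \<le> sqrt (3 * cbound j) * sqrt (real (card J))" using cb0 by simp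
    then show ?thesis using True by linarith
  next
    case False
    define R where "R = Rr J j"
    define C where "C = Cc J j"
    define M where "M = 2 * real j * (1 + 3 * ln (1 + real j))"
    have R0: "R > 0" using False R_def by simp
    have CR: "R \<le> C" using Rr_le_Cc[of J j] R_def C_def by simp
    have C0: "C > 0" using R0 CR by simp
    have JE: "J \<in> EE j" unfolding EE_def using J GC_props[OF J(1)] by (auto intro!: order_trans[OF Min_le])
    have "Phi R C \<le> (\<Sum>I\<in>EE j. Phi (Rr I j) (Cc I j))"
      unfolding R_def C_def using JE EE_finite Phi_ge1[OF Cc_nonneg]
      by (intro member_le_sum) (auto intro: order_trans[OF zero_le_one])
    also have "\<dots> \<le> real (card (EE j)) * (1 + 3 * ln (1 + real j))" using total_pot j by simp
    also have "\<dots> \<le> M" unfolding M_def using EE_card[of j] j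
      by (intro mult_right_mono) auto
    finally have PM: "Phi R C \<le> M" .
    have Phi_eq: "Phi R C = exp (R^2/(3*C))" unfolding Phi_def using R0 by simp
    have "0 < Phi R C" using Phi_eq by simp
    then have Mp: "M > 0" using PM by linarith
    have "R^2/(3*C) \<le> ln M" using PM Phi_eq Mp by (metis exp_le_cancel_iff exp_ln)
    then have "R^2 \<le> 3*C * ln M" using C0 by (simp add: field_simps)
    also have "\<dots> \<le> 3 * C * cbound j" using ln_M_bound[OF j(1)] C0 unfolding M_def by simp
    also have "\<dots> \<le> 3 * real (card J) * cbound j"
    proof -
      have "{u\<in>J. u \<le> j} = J" using J by auto
      then have "C \<le> real (card J)" using Cc_le[OF J(1) j(2)] C_def by simp
      then show ?thesis using cb0 by (intro mult_right_mono) auto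
    qed
    finally have "R \<le> sqrt (3 * real (card J) * cbound j)" by (intro real_le_rsqrt)
    also have "\<dots> = sqrt (3 * cbound j) * sqrt (real (card J))" by (simp add: real_sqrt_mult mult.commute mult.left_commute)
    finally show ?thesis unfolding R_def .
  qed
qed

end



lemma norm_sub_scale_sq:
  fixes u v :: "'a::real_inner"
  shows "(norm (u - c *\<^sub>R v))^2 = (norm u)^2 - 2 * c * (v \<bullet> u) + c^2 * (norm v)^2"
  unfolding power2_norm_eq_inner
  by (simp add: inner_diff_left inner_diff_right inner_commute power2_eq_square algebra_simps)

lemma sum_blocks:
  fixes h :: "nat \<Rightarrow> real"
  shows "(\<Sum>r\<in>{a..<a + M*B}. h r) = (\<Sum>m<M. \<Sum>r\<in>{a + m*B..<a + Suc m * B}. h r)"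
proof (induction M)
  case 0 then show ?case by simp
next
  case (Suc M)
  have "(\<Sum>r\<in>{a..<a + Suc M*B}. h r) = (\<Sum>r\<in>{a..<a + M*B}. h r) + (\<Sum>r\<in>{a + M*B..<a + Suc M*B}. h r)"
    by (rule sum.atLeastLessThan_concat[symmetric]) auto
  then show ?case using Suc by simp
qed

lemma GC_ge1': "I \<in> GC \<Longrightarrow> u \<in> I \<Longrightarrow> 1 \<le> u"
  using GC_props(3)[of I] by (cases u) auto

locale bogdJ =
  fixes K :: "'a::euclidean_space set" and R G :: real and T i j :: nat and J :: "nat set"
    and f :: "nat \<Rightarrow> 'a \<Rightarrow> real" and g :: "nat \<Rightarrow> 'a \<Rightarrow> 'a"
    and Orc :: "nat set \<Rightarrow> nat \<Rightarrow> real \<Rightarrow> 'a \<Rightarrow> 'a \<Rightarrow> 'a \<times> 'a"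
    and x0 :: "nat set \<Rightarrow> 'a" and bsz :: "nat set \<Rightarrow> nat"
  assumes subK: "K \<subseteq> cball 0 R"
    and gb: "\<forall>t\<in>{1..T}. \<forall>x\<in>K. norm (g t x) \<le> G"
    and sg: "\<forall>t\<in>{1..T}. \<forall>x\<in>K. \<forall>y\<in>K. f t y \<ge> f t x + g t x \<bullet> (y - x)"
    and IPspec: "\<forall>I m \<epsilon> x y0. \<epsilon> > 0 \<and> x \<in> K \<longrightarrow>
       (case Orc I m \<epsilon> x y0 of (x', y') \<Rightarrow>
          x' \<in> K \<and> y' \<in> cball 0 R \<and> dist x' y' \<le> sqrt (3 * \<epsilon>) \<and> (\<forall>z\<in>K. dist y' z \<le> dist y0 z))"
    and start: "\<forall>I\<in>GC. x0 I \<in> K"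
    and blockJ: "real (bsz J) = eta J powr (-2/3)"
    and J: "J \<in> GC" "J = {i..j}" "j \<le> T"
begin

lemma Orc_props: assumes "\<epsilon> > 0" "x \<in> K"
  shows "fst (Orc I m \<epsilon> x y0) \<in> K" "dist (fst (Orc I m \<epsilon> x y0)) (snd (Orc I m \<epsilon> x y0)) \<le> sqrt (3 * \<epsilon>)"
    "\<And>z. z \<in> K \<Longrightarrow> dist (snd (Orc I m \<epsilon> x y0)) z \<le> dist y0 z"
  using IPspec assms by (auto simp: split_beta)

definition "n = card J"
definition "Kb = bsz J"
definition "\<eta> = eta J"
definition "\<epsilon> = \<eta> powr (2/3)"
definition "st m = bogd_state Orc g x0 bsz J m"
definition "xm m = fst (st m)"
definition "ym m = snd (st m)"
definition "blk m = {i + m*Kb ..< i + Suc m * Kb}"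
definition "gm m = (\<Sum>r\<in>blk m. g r (xm m))"

lemma J_facts: "1 \<le> i" "i \<le> j" "Min J = i" "n = j + 1 - i" "n \<ge> 1"
proof -
  have ne: "J \<noteq> {}" using GC_props(2)[OF J(1)] .
  then show ij: "i \<le> j" using J(2) by auto
  show "1 \<le> i" using GC_ge1'[OF J(1)] J(2) ij by auto
  show "Min J = i" using J(2) ij by (intro Min_eqI) auto
  show "n = j + 1 - i" unfolding n_def using J(2) by simp
  then show "n \<ge> 1" using ij by simp
qed

lemma eta_pos': "\<eta> > 0" unfolding \<eta>_def eta_def using J_facts(5) n_def by simp

lemma eps_pos: "\<epsilon> > 0" unfolding \<epsilon>_def using eta_pos' by simp

lemma xm_K: "xm m \<in> K"
proof (induction m)
  case 0 then show ?case using start J(1) by (simp add: xm_def st_def)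
next
  case (Suc m)
  have "st (Suc m) = Orc J (Suc m) (eta J powr (2/3)) (xm m) (ym m - eta J *\<^sub>R (\<Sum>r\<in>{Min J + m * bsz J..<Min J + Suc m * bsz J}. g r (xm m)))"
    unfolding st_def xm_def ym_def by (simp add: split_beta)
  then show ?case using Orc_props(1)[OF eps_pos Suc] unfolding xm_def \<epsilon>_def \<eta>_def by simp
qed

lemma st_Suc: "st (Suc m) = Orc J (Suc m) \<epsilon> (xm m) (ym m - \<eta> *\<^sub>R gm m)"
  unfolding st_def xm_def ym_def gm_def blk_def \<epsilon>_def \<eta>_def Kb_def
  by (simp add: split_beta J_facts(3))

lemma dist_xy: "dist (xm m) (ym m) \<le> sqrt (3 * \<epsilon>)"
proof (cases m)
  case 0 then show ?thesis using eps_pos by (simp add: xm_def ym_def st_def)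
next
  case (Suc m')
  have "dist (fst (st (Suc m'))) (snd (st (Suc m'))) \<le> sqrt (3 * \<epsilon>)"
    unfolding st_Suc by (rule Orc_props(2)[OF eps_pos xm_K])
  then show ?thesis unfolding Suc xm_def ym_def .
qed

lemma y_step: "z \<in> K \<Longrightarrow> dist (ym (Suc m)) z \<le> dist (ym m - \<eta> *\<^sub>R gm m) z"
  unfolding ym_def[of "Suc m"] st_Suc by (rule Orc_props(3)[OF eps_pos xm_K])


lemma Kb_facts: "real Kb = real n powr (1/2)" "Kb * Kb = n" "Kb \<ge> 1"
proof -
  have n0: "real n > 0" using J_facts(5) by simp
  have "real Kb = (real n powr (-3/4)) powr (-2/3)" using blockJ unfolding Kb_def eta_def n_def by simp
  also have "\<dots> = real n powr (1/2)" by (simp add: powr_powr)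
  finally show k: "real Kb = real n powr (1/2)" .
  then have "real Kb = sqrt (real n)" using n0 by (simp add: powr_half_sqrt)
  then have "real Kb * real Kb = real n" using n0 by simp
  then show kk: "Kb * Kb = n" by (metis of_nat_eq_iff of_nat_mult)
  show "Kb \<ge> 1" using kk J_facts(5) by (cases Kb) auto
qed

lemma J_blocks: "J = {i..<i + Kb*Kb}"
  using J(2) J_facts(2,4) Kb_facts(2) by auto

lemma blk_sub: assumes "m < Kb" shows "blk m \<subseteq> J" "blk m \<subseteq> {1..T}"
proof -
  have "Suc m * Kb \<le> Kb * Kb" using mult_le_mono1[of "Suc m" Kb Kb] assms by simp
  then have "blk m \<subseteq> {i..<i + Kb*Kb}" unfolding blk_def by auto
  then show s: "blk m \<subseteq> J" by (rule ord_le_eq_trans) (rule J_blocks[symmetric])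
  show "blk m \<subseteq> {1..T}" using s J(2,3) J_facts(1) by auto
qed

lemma ep_blk: assumes "r \<in> blk m" shows "expert_play Orc g x0 bsz J r = xm m"
proof -
  have "Kb * m \<le> r - i" "r - i < Kb * Suc m" using assms unfolding blk_def
    by (auto simp: algebra_simps)
  then have "(r - Min J) div bsz J = m" using J_facts(3) unfolding Kb_def by (intro div_nat_eqI) auto
  then show ?thesis unfolding expert_play_def xm_def st_def by simp
qed

lemma card_blk: "card (blk m) = Kb" unfolding blk_def by simp

lemma G_nonneg: "G \<ge> 0"
proof -
  have "1 \<in> {1..T}" using J(3) J_facts(1,2) by simp
  then have "norm (g 1 (xm 0)) \<le> G" using gb xm_K by blast
  then show ?thesis using norm_ge_zero order_trans by blast
qed

lemma gm_norm: assumes "m < Kb" shows "norm (gm m) \<le> real Kb * G"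
proof -
  have "norm (gm m) \<le> (\<Sum>r\<in>blk m. norm (g r (xm m)))" unfolding gm_def by (rule norm_sum)
  also have "\<dots> \<le> (\<Sum>r\<in>blk m. G)" using blk_sub(2)[OF assms] gb xm_K by (intro sum_mono) blast
  also have "\<dots> = real Kb * G" using card_blk by simp
  finally show ?thesis .
qed

lemma block_bound: assumes m: "m < Kb" and z: "z \<in> K"
  shows "(\<Sum>r\<in>blk m. f r (xm m) - f r z)
    \<le> ((norm (ym m - z))^2 - (norm (ym (Suc m) - z))^2)/(2*\<eta>) + \<eta>*(real Kb*G)^2/2 + real Kb*G* sqrt (3*\<epsilon>)"
proof -
  define x where "x = xm m"
  define y where "y = ym m"
  define y' where "y' = ym (Suc m)"
  define gg where "gg = gm m"
  have S1: "(\<Sum>r\<in>blk m. f r x - f r z) \<le> gg \<bullet> (x - z)"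
  proof -
    have "(\<Sum>r\<in>blk m. f r x - f r z) \<le> (\<Sum>r\<in>blk m. g r x \<bullet> (x - z))"
    proof (intro sum_mono)
      fix r assume "r \<in> blk m"
      then have "r \<in> {1..T}" using blk_sub(2)[OF m] by blast
      then have "f r z \<ge> f r x + g r x \<bullet> (z - x)" using sg z xm_K unfolding x_def by blast
      moreover have "g r x \<bullet> (z - x) = - (g r x \<bullet> (x - z))" by (simp add: inner_diff_right)
      ultimately show "f r x - f r z \<le> g r x \<bullet> (x - z)" by simp
    qed
    also have "\<dots> = gg \<bullet> (x - z)" unfolding gg_def gm_def x_def by (simp add: inner_sum_left)
    finally show ?thesis .
  qed
  have S2: "gg \<bullet> (x - z) = gg \<bullet> (y - z) + gg \<bullet> (x - y)" by (simp add: inner_diff_right)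
  have ng: "norm gg \<le> real Kb * G" unfolding gg_def using gm_norm[OF m] .
  have S3: "gg \<bullet> (x - y) \<le> real Kb * G * sqrt (3*\<epsilon>)"
  proof -
    have "gg \<bullet> (x - y) \<le> norm gg * norm (x - y)" by (rule norm_cauchy_schwarz)
    also have "norm (x - y) \<le> sqrt (3*\<epsilon>)" using dist_xy[of m] unfolding x_def y_def dist_norm .
    then have "norm gg * norm (x - y) \<le> real Kb * G * sqrt (3*\<epsilon>)"
      using ng G_nonneg by (intro mult_mono) auto
    finally show ?thesis .
  qed
  have d: "norm (y' - z) \<le> norm ((y - z) - \<eta> *\<^sub>R gg)"
    using y_step[OF z, of m] unfolding y'_def y_def gg_def dist_norm by (simp add: algebra_simps)
  then have "(norm (y' - z))^2 \<le> (norm ((y - z) - \<eta> *\<^sub>R gg))^2" by (intro power_mono) auto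
  also have "\<dots> = (norm (y - z))^2 - 2 * \<eta> * (gg \<bullet> (y - z)) + \<eta>^2 * (norm gg)^2"
    by (rule norm_sub_scale_sq)
  finally have e: "2 * \<eta> * (gg \<bullet> (y - z)) \<le> (norm (y - z))^2 - (norm (y' - z))^2 + \<eta>^2 * (norm gg)^2"
    by linarith
  have ep: "\<eta> > 0" by (rule eta_pos')
  have "gg \<bullet> (y - z) \<le> ((norm (y - z))^2 - (norm (y' - z))^2 + \<eta>^2 * (norm gg)^2) / (2*\<eta>)"
    using e ep by (simp add: pos_le_divide_eq mult.commute)
  also have "\<dots> = ((norm (y - z))^2 - (norm (y' - z))^2)/(2*\<eta>) + \<eta> * (norm gg)^2 / 2"
    using ep by (simp add: field_simps power2_eq_square)
  also have "\<eta> * (norm gg)^2 / 2 \<le> \<eta> * (real Kb * G)^2 / 2"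
    using ng ep by (intro divide_right_mono mult_left_mono power_mono) auto
  finally have S4: "gg \<bullet> (y - z) \<le> ((norm (y - z))^2 - (norm (y' - z))^2)/(2*\<eta>) + \<eta> * (real Kb * G)^2 / 2"
    by simp
  show ?thesis using S1 S2 S3 S4 unfolding x_def y_def y'_def by linarith
qed

lemma total_bound: assumes z: "z \<in> K"
  shows "(\<Sum>u\<in>J. f u (expert_play Orc g x0 bsz J u) - f u z)
    \<le> (norm (x0 J - z))^2/(2*\<eta>) + real Kb * (\<eta>*(real Kb*G)^2/2 + real Kb*G* sqrt (3*\<epsilon>))"
proof -
  define D where "D m = (norm (ym m - z))^2" for m
  define c where "c = \<eta>*(real Kb*G)^2/2 + real Kb*G* sqrt (3*\<epsilon>)"
  have "(\<Sum>u\<in>J. f u (expert_play Orc g x0 bsz J u) - f u z)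
      = (\<Sum>m<Kb. \<Sum>r\<in>blk m. f r (expert_play Orc g x0 bsz J r) - f r z)"
    unfolding arg_cong[where f="\<lambda>A. \<Sum>u\<in>A. f u (expert_play Orc g x0 bsz J u) - f u z", OF J_blocks] blk_def
    by (rule sum_blocks)
  also have "\<dots> = (\<Sum>m<Kb. \<Sum>r\<in>blk m. f r (xm m) - f r z)"
    using ep_blk by (intro sum.cong refl) simp
  also have "\<dots> \<le> (\<Sum>m<Kb. (D m - D (Suc m))/(2*\<eta>) + c)"
    using block_bound z unfolding D_def c_def by (intro sum_mono) (simp add: add.assoc)
  also have "\<dots> = (\<Sum>m<Kb. D m - D (Suc m))/(2*\<eta>) + real Kb * c"
    by (simp add: sum.distrib sum_divide_distrib)
  also have "(\<Sum>m<Kb. D m - D (Suc m)) = D 0 - D Kb" by (rule sum_lessThan_telescope')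
  also have "(D 0 - D Kb)/(2*\<eta>) \<le> D 0/(2*\<eta>)"
    using eta_pos' unfolding D_def by (intro divide_right_mono) auto
  also have "D 0 = (norm (x0 J - z))^2" unfolding D_def ym_def st_def by simp
  finally show ?thesis unfolding c_def by simp
qed

lemma expert_regret: assumes z: "z \<in> K"
  shows "(\<Sum>u\<in>J. f u (expert_play Orc g x0 bsz J u) - f u z)
    \<le> (sqrt 3 * G + 7/4 * (2 * R)^2 + 1/2 * G^2) * real (card J) powr (3/4)"
proof -
  have n0: "real n > 0" using J_facts(5) by simp
  define P where "P = real n powr (3/4)"
  have P0: "P \<ge> 0" unfolding P_def by simp
  have G0: "G \<ge> 0" by (rule G_nonneg)
  have x0K: "x0 J \<in> K" using start J(1) by blast
  have "norm (x0 J - z) \<le> norm (x0 J) + norm z" by (rule norm_triangle_ineq4)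
  also have "\<dots> \<le> 2 * R"
  proof -
    have "norm (x0 J) \<le> R" "norm z \<le> R" using subK x0K z by (auto simp: subset_iff dist_norm)
    then show ?thesis by linarith
  qed
  finally have "(norm (x0 J - z))^2 \<le> (2*R)^2" by (intro power_mono) auto
  then have T1: "(norm (x0 J - z))^2/(2*\<eta>) \<le> (2*R)^2/(2*\<eta>)" using eta_pos' by (intro divide_right_mono) auto
  have inv: "1/\<eta> = P" unfolding P_def \<eta>_def eta_def n_def by (simp add: powr_minus_divide)
  have "(2*R)^2/(2*\<eta>) = 1/2 * (2*R)^2 * (1/\<eta>)" by simp
  then have T1': "(2*R)^2/(2*\<eta>) = 1/2 * (2*R)^2 * P" using inv by simp
  have s: "real Kb = real n powr (1/2)" by (rule Kb_facts(1))
  have e2: "real Kb * (\<eta>*(real Kb*G)^2/2) = 1/2 * G^2 * P"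
  proof -
    have "real Kb * (\<eta>*(real Kb*G)^2/2) = 1/2 * G^2 * (real Kb * real Kb * real Kb * \<eta>)"
      by (simp add: power2_eq_square algebra_simps)
    also have "real Kb * real Kb * real Kb * \<eta> = P"
      unfolding s P_def \<eta>_def eta_def n_def by (simp only: powr_add[symmetric]) simp
    finally show ?thesis .
  qed
  have e3: "real Kb * (real Kb*G* sqrt (3*\<epsilon>)) = sqrt 3 * G * P"
  proof -
    have eps: "\<epsilon> = real n powr (-1/2)" unfolding \<epsilon>_def \<eta>_def eta_def n_def by (simp add: powr_powr)
    have "sqrt \<epsilon> = real n powr (-1/4)" unfolding eps using n0
      by (simp add: powr_half_sqrt[symmetric] powr_powr)
    then have "sqrt (3*\<epsilon>) = sqrt 3 * real n powr (-1/4)" by (simp add: real_sqrt_mult)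
    then have "real Kb * (real Kb*G* sqrt (3*\<epsilon>)) = sqrt 3 * G * (real Kb * real Kb * real n powr (-1/4))"
      by (simp add: algebra_simps)
    also have "real Kb * real Kb * real n powr (-1/4) = P"
      unfolding s P_def by (simp only: powr_add[symmetric]) simp
    finally show ?thesis .
  qed
  have "(\<Sum>u\<in>J. f u (expert_play Orc g x0 bsz J u) - f u z)
      \<le> 1/2 * (2*R)^2 * P + (1/2 * G^2 * P + sqrt 3 * G * P)"
    using total_bound[OF z] T1 T1' e2 e3 by (simp add: distrib_left)
  also have "\<dots> \<le> (sqrt 3 * G + 7/4 * (2 * R)^2 + 1/2 * G^2) * P"
    using P0 by (simp add: algebra_simps mult_right_mono)
  finally show ?thesis unfolding P_def n_def .
qed

end



theorem mainTheorem7: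
  fixes K :: "'a::euclidean_space set" and R G :: real and T i j :: nat and J :: "nat set"
    and f :: "nat \<Rightarrow> 'a \<Rightarrow> real" and g :: "nat \<Rightarrow> 'a \<Rightarrow> 'a"
    and Orc :: "nat set \<Rightarrow> nat \<Rightarrow> real \<Rightarrow> 'a \<Rightarrow> 'a \<Rightarrow> 'a \<times> 'a"
    and x0 :: "nat set \<Rightarrow> 'a" and bsz :: "nat set \<Rightarrow> nat"
  assumes A1: "convex K" "compact K" "0 \<in> K" "K \<subseteq> cball 0 R"
    and A2: "\<forall>t\<in>{1..T}. G-lipschitz_on K (f t)"
      "\<forall>t\<in>{1..T}. \<forall>x\<in>K. norm (g t x) \<le> G"
    and A3: "\<forall>t\<in>{1..T}. convex_on K (f t)"
      "\<forall>t\<in>{1..T}. \<forall>x\<in>K. \<forall>y\<in>K. f t y \<ge> f t x + g t x \<bullet> (y - x)"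
    and A4: "\<forall>t\<in>{1..T}. \<forall>x\<in>K. 0 \<le> f t x \<and> f t x \<le> 1"
    and IPspec: "\<forall>I m \<epsilon> x y0. \<epsilon> > 0 \<and> x \<in> K \<longrightarrow>
       (case Orc I m \<epsilon> x y0 of (x', y') \<Rightarrow>
          x' \<in> K \<and> y' \<in> cball 0 R \<and> dist x' y' \<le> sqrt (3 * \<epsilon>) \<and> (\<forall>z\<in>K. dist y' z \<le> dist y0 z))"
    and start: "\<forall>I\<in>GC. x0 I \<in> K"
    and blocks: "\<forall>I\<in>GC. bsz I \<ge> 1"
    and blockJ: "real (bsz J) = eta J powr (-2/3)"
    and J: "J \<in> GC" "J = {i..j}" "j \<le> T"
  shows "(\<Sum>u\<in>J. f u (pola_play f (expert_play Orc g x0 bsz) u)) - (INF x\<in>K. \<Sum>u\<in>J. f u x)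
         \<le> sqrt (3 * cbound j) * real (card J) powr (1/2)
           + (sqrt 3 * G + 7/4 * (2 * R)^2 + 1/2 * G^2) * real (card J) powr (3/4)"
proof -
  have IPK: "\<And>I m \<epsilon> x y0. \<epsilon> > 0 \<Longrightarrow> x \<in> K \<Longrightarrow> fst (Orc I m \<epsilon> x y0) \<in> K"
    using IPspec by (auto simp: split_beta)
  interpret P: pola K T f g Orc x0 bsz
    by (unfold_locales) (use A1 A3 A4 IPK start in auto)
  interpret B: bogdJ K R G T i j J f g Orc x0 bsz
    by (unfold_locales) (use A1 A2 A3 IPspec start blockJ J in auto)
  define ep where "ep = expert_play Orc g x0 bsz"
  define B1 where "B1 = sqrt (3 * cbound j) * real (card J) powr (1/2)"
  define B2 where "B2 = (sqrt 3 * G + 7/4 * (2 * R)^2 + 1/2 * G^2) * real (card J) powr (3/4)"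
  have j1: "1 \<le> j" using B.J_facts(1,2) by simp
  have Jsub: "J \<subseteq> {..j}" using J(2) by auto
  have "P.Rr J j \<le> sqrt (3 * cbound j) * sqrt (real (card J))"
    by (rule P.meta_regret[OF J(1) Jsub j1 J(3)])
  also have "sqrt (real (card J)) = real (card J) powr (1/2)" by (simp add: powr_half_sqrt)
  finally have R1: "P.Rr J j \<le> B1" unfolding B1_def .
  have "{u\<in>J. u \<le> j} = J" using Jsub by auto
  then have Rr_eq: "P.Rr J j = (\<Sum>u\<in>J. f u (pola_play f ep u)) - (\<Sum>u\<in>J. f u (ep J u))"
    unfolding P.Rr_def regR_def P.xs_def ep_def by (simp add: sum_subtractf)
  have "(\<Sum>u\<in>J. f u (pola_play f ep u)) - (B1 + B2) \<le> (INF x\<in>K. \<Sum>u\<in>J. f u x)"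
  proof (rule cINF_greatest)
    show "K \<noteq> {}" using A1 by auto
  next
    fix z assume z: "z \<in> K"
    have "(\<Sum>u\<in>J. f u (ep J u) - f u z) \<le> B2" unfolding B2_def ep_def by (rule B.expert_regret[OF z])
    then have "(\<Sum>u\<in>J. f u (ep J u)) - (\<Sum>u\<in>J. f u z) \<le> B2" by (simp add: sum_subtractf)
    then show "(\<Sum>u\<in>J. f u (pola_play f ep u)) - (B1 + B2) \<le> (\<Sum>u\<in>J. f u z)"
      using R1 Rr_eq by linarith
  qed
  then show ?thesis unfolding B1_def B2_def ep_def by linarith
qed



end
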